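(* Let $I$ be an ideal of a multiplicative Lie algebra $G$. Then: (1) if $I\cap[G,G]=1$, then $Z(G/I)=Z(G)/I$; (2) if $I\cap(G\star G)=1$, then $LZ(G/I)=LZ(G)/I$; (3) if $I\cap{}^M[G,G]=1$, then $\mathcal Z(G/I)=\mathcal Z(G)/I$.
   Context: A multiplicative Lie algebra is a group $(G,\cdot)$ with a binary operation $\star$ such that for all $x,y,z\in G$: $x\star x=1$; $x\star(yz)=(x\star y)\,{}^y(x\star z)$; $(xy)\star z={}^x(y\star z)(x\star z)$; $((x\star y)\star{}^yz)((y\star z)\star{}^zx)((z\star x)\star{}^xy)=1$; ${}^z(x\star y)={}^zx\star{}^zy$, where ${}^xy=xyx^{-1}$. An ideal is a normal subgroup $I$ with $x\star y\in I$ for all $x\in G$, $y\in I$; $G/I$ carries the induced structure. $Z(G)$ is the group center, $LZ(G)=\{x\in G: x\star y=1\ \forall y\in G\}$ the Lie center, $\mathcal Z(G)=LZ(G)\cap Z(G)$; $[G,G]$ is the commutator subgroup, $G\star G$ the ideal generated by all $a\star b$, and ${}^M[G,G]=(G\star G)[G,G]$. *)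

theory Defs
  imports "HOL-Algebra.Algebra"
begin

definition conj :: "('a, 'b) monoid_scheme \<Rightarrow> 'a \<Rightarrow> 'a \<Rightarrow> 'a" where
  "conj G x y = x \<otimes>\<^bsub>G\<^esub> y \<otimes>\<^bsub>G\<^esub> inv\<^bsub>G\<^esub> x"

definition mult_lie_alg :: "('a, 'b) monoid_scheme \<Rightarrow> ('a \<Rightarrow> 'a \<Rightarrow> 'a) \<Rightarrow> bool" where
  "mult_lie_alg G st \<longleftrightarrow> group G
    \<and> (\<forall>x\<in>carrier G. \<forall>y\<in>carrier G. st x y \<in> carrier G)
    \<and> (\<forall>x\<in>carrier G. st x x = \<one>\<^bsub>G\<^esub>)
    \<and> (\<forall>x\<in>carrier G. \<forall>y\<in>carrier G. \<forall>z\<in>carrier G.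
          st x (y \<otimes>\<^bsub>G\<^esub> z) = st x y \<otimes>\<^bsub>G\<^esub> conj G y (st x z))
    \<and> (\<forall>x\<in>carrier G. \<forall>y\<in>carrier G. \<forall>z\<in>carrier G.
          st (x \<otimes>\<^bsub>G\<^esub> y) z = conj G x (st y z) \<otimes>\<^bsub>G\<^esub> st x z)
    \<and> (\<forall>x\<in>carrier G. \<forall>y\<in>carrier G. \<forall>z\<in>carrier G.
          st (st x y) (conj G y z) \<otimes>\<^bsub>G\<^esub> st (st y z) (conj G z x) \<otimes>\<^bsub>G\<^esub> st (st z x) (conj G x y)
            = \<one>\<^bsub>G\<^esub>)
    \<and> (\<forall>x\<in>carrier G. \<forall>y\<in>carrier G. \<forall>z\<in>carrier G.
          conj G z (st x y) = st (conj G z x) (conj G z y))"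

definition mla_ideal :: "('a, 'b) monoid_scheme \<Rightarrow> ('a \<Rightarrow> 'a \<Rightarrow> 'a) \<Rightarrow> 'a set \<Rightarrow> bool" where
  "mla_ideal G st I \<longleftrightarrow> I \<lhd> G \<and> (\<forall>x\<in>carrier G. \<forall>y\<in>I. st x y \<in> I)"

definition quot_star :: "('a, 'b) monoid_scheme \<Rightarrow> ('a \<Rightarrow> 'a \<Rightarrow> 'a) \<Rightarrow> 'a set \<Rightarrow> 'a set \<Rightarrow> 'a set \<Rightarrow> 'a set" where
  "quot_star G st I C D = I #>\<^bsub>G\<^esub> st (SOME x. x \<in> C) (SOME y. y \<in> D)"

definition grp_center :: "('a, 'b) monoid_scheme \<Rightarrow> 'a set" where
  "grp_center G = {x \<in> carrier G. \<forall>y\<in>carrier G. x \<otimes>\<^bsub>G\<^esub> y = y \<otimes>\<^bsub>G\<^esub> x}"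

definition lie_center :: "('a, 'b) monoid_scheme \<Rightarrow> ('a \<Rightarrow> 'a \<Rightarrow> 'a) \<Rightarrow> 'a set" where
  "lie_center G st = {x \<in> carrier G. \<forall>y\<in>carrier G. st x y = \<one>\<^bsub>G\<^esub>}"

definition mla_center :: "('a, 'b) monoid_scheme \<Rightarrow> ('a \<Rightarrow> 'a \<Rightarrow> 'a) \<Rightarrow> 'a set" where
  "mla_center G st = lie_center G st \<inter> grp_center G"

definition star_ideal :: "('a, 'b) monoid_scheme \<Rightarrow> ('a \<Rightarrow> 'a \<Rightarrow> 'a) \<Rightarrow> 'a set" where
  "star_ideal G st = \<Inter>{J. mla_ideal G st J \<and> {st a b | a b. a \<in> carrier G \<and> b \<in> carrier G} \<subseteq> J}"

definition comm_subgroup :: "('a, 'b) monoid_scheme \<Rightarrow> 'a set" where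
  "comm_subgroup G = derived G (carrier G)"

definition M_comm :: "('a, 'b) monoid_scheme \<Rightarrow> ('a \<Rightarrow> 'a \<Rightarrow> 'a) \<Rightarrow> 'a set" where
  "M_comm G st = star_ideal G st <#>\<^bsub>G\<^esub> comm_subgroup G"

text \<open>Image of a subset under the natural map \<open>G \<rightarrow> G/I\<close>, i.e. \<open>H/I\<close> meaning \<open>HI/I\<close>.\<close>
definition quot_img :: "('a, 'b) monoid_scheme \<Rightarrow> 'a set \<Rightarrow> 'a set \<Rightarrow> 'a set set" where
  "quot_img G I H = (\<lambda>x. I #>\<^bsub>G\<^esub> x) ` H"

end

theory Submission
  imports Defs
begin

locale mlax = group G for G (structure) +
  fixes st :: "'a \<Rightarrow> 'a \<Rightarrow> 'a"
  assumes st_closed: "x \<in> carrier G \<Longrightarrow> y \<in> carrier G \<Longrightarrow> st x y \<in> carrier G"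
    and st_self: "x \<in> carrier G \<Longrightarrow> st x x = \<one>"
    and st_right: "x \<in> carrier G \<Longrightarrow> y \<in> carrier G \<Longrightarrow> z \<in> carrier G \<Longrightarrow>
          st x (y \<otimes> z) = st x y \<otimes> conj G y (st x z)"
    and st_left: "x \<in> carrier G \<Longrightarrow> y \<in> carrier G \<Longrightarrow> z \<in> carrier G \<Longrightarrow>
          st (x \<otimes> y) z = conj G x (st y z) \<otimes> st x z"

lemma mlaxI: "mult_lie_alg G st \<Longrightarrow> mlax G st"
  unfolding mult_lie_alg_def mlax_def mlax_axioms_def by blast

context mlax
begin

lemma cancel_l [simp]: "x \<in> carrier G \<Longrightarrow> y \<in> carrier G \<Longrightarrow> inv x \<otimes> (x \<otimes> y) = y"
  by (simp add: m_assoc[symmetric])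

lemma cancel_l2 [simp]: "x \<in> carrier G \<Longrightarrow> y \<in> carrier G \<Longrightarrow> x \<otimes> (inv x \<otimes> y) = y"
  by (simp add: m_assoc[symmetric])

lemma conj_closed: "a \<in> carrier G \<Longrightarrow> b \<in> carrier G \<Longrightarrow> conj G a b \<in> carrier G"
  by (simp add: conj_def)

lemma st_anti: assumes a: "a \<in> carrier G" and b: "b \<in> carrier G"
  shows "st b a \<otimes> st a b = \<one>"
proof -
  have 1: "st b (a \<otimes> b) = st b a"
    using st_right[OF b a b] st_self[OF b] a b st_closed by (simp add: conj_def)
  have 2: "st a (a \<otimes> b) = conj G a (st a b)"
    using st_right[OF a a b] st_self[OF a] a b st_closed conj_closed by simp
  have "\<one> = st (a \<otimes> b) (a \<otimes> b)" using a b st_self by simp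
  also have "\<dots> = conj G a (st b a) \<otimes> conj G a (st a b)"
    using st_left[OF a b, of "a \<otimes> b"] 1 2 a b by simp
  also have "\<dots> = a \<otimes> (st b a \<otimes> st a b) \<otimes> inv a"
    using a b st_closed by (simp add: conj_def m_assoc)
  finally have e: "\<one> = a \<otimes> (st b a \<otimes> st a b) \<otimes> inv a" .
  define w where "w = st b a \<otimes> st a b"
  have w: "w \<in> carrier G" using a b st_closed w_def by simp
  have ww: "w = inv a \<otimes> (a \<otimes> w \<otimes> inv a) \<otimes> a" using a w by (simp add: m_assoc)
  from e have e': "a \<otimes> w \<otimes> inv a = \<one>" unfolding w_def by (rule sym)
  have "inv a \<otimes> (a \<otimes> w \<otimes> inv a) \<otimes> a = \<one>" using e' a by simp
  with ww have "w = \<one>" by simp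
  then show ?thesis using w_def by simp
qed

end

context normal
begin

lemma fg: "group (G Mod H)" by (rule factorgroup_is_group)

lemma q_lone: "M \<in> rcosets H \<Longrightarrow> H <#> M = M"
  using monoid.l_one[OF group.is_monoid[OF fg], of M] by (simp add: FactGroup_def)

lemma q_rone: "M \<in> rcosets H \<Longrightarrow> M <#> H = M"
  using monoid.r_one[OF group.is_monoid[OF fg], of M] by (simp add: FactGroup_def)

lemma phi_mult: "x \<in> carrier G \<Longrightarrow> y \<in> carrier G \<Longrightarrow> H #> (x \<otimes> y) = (H #> x) <#> (H #> y)"
  by (simp add: rcos_sum)

lemma phi_I: "i \<in> H \<Longrightarrow> H #> i = H"
  by (simp add: rcos_const is_group)

lemma phi_car: "x \<in> carrier G \<Longrightarrow> H #> x \<in> rcosets H"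
  by (simp add: rcosetsI subset)

lemma phi_conj: assumes "i \<in> H" "a \<in> carrier G"
  shows "H #> conj G i a = H #> a"
proof -
  have i: "i \<in> carrier G" using assms subset by auto
  have "H #> conj G i a = (H #> i) <#> (H #> a) <#> (H #> inv i)"
    using i assms by (simp add: conj_def phi_mult)
  also have "\<dots> = H #> a" using assms phi_I m_inv_closed q_lone q_rone phi_car by simp
  finally show ?thesis .
qed

end

lemma (in mlax) wd:
  assumes N: "normal I G" and id: "\<forall>x\<in>carrier G. \<forall>y\<in>I. st x y \<in> I"
    and x: "x \<in> carrier G" and y: "y \<in> carrier G"
    and x': "x' \<in> I #> x" and y': "y' \<in> I #> y"
  shows "I #> st x' y' = I #> st x y"
proof -
  interpret N: normal I G by (rule N)
  have Isub: "I \<subseteq> carrier G" by (rule N.subset)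
  obtain i where i: "i \<in> I" "x' = i \<otimes> x" using x' unfolding r_coset_def by blast
  obtain j where j: "j \<in> I" "y' = j \<otimes> y" using y' unfolding r_coset_def by blast
  have ic: "i \<in> carrier G" "j \<in> carrier G" using i j Isub by auto
  have stI: "st a b \<in> I" if "a \<in> I" "b \<in> carrier G" for a b
  proof -
    have ac: "a \<in> carrier G" using that Isub by auto
    have "st b a \<in> I" using id that by blast
    moreover have "st a b = inv (st b a)"
      using inv_equality[OF st_anti[OF that(2) ac]] st_closed ac that(2) by simp
    ultimately show ?thesis by simp
  qed
  have "I #> st x' y' = I #> (st x' j \<otimes> conj G j (st x' y))"
    using i j ic x y st_right by simp
  also have "\<dots> = (I #> st x' j) <#> (I #> conj G j (st x' y))"
    using ic i x y by (simp add: N.phi_mult st_closed conj_closed)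
  also have "\<dots> = I #> st x' y"
    using id j ic i x y st_closed N.phi_I N.phi_conj N.q_lone N.phi_car by simp
  also have "\<dots> = I #> (conj G i (st x y) \<otimes> st i y)"
    using i ic x y st_left by simp
  also have "\<dots> = (I #> conj G i (st x y)) <#> (I #> st i y)"
    using ic i x y by (simp add: N.phi_mult st_closed conj_closed)
  also have "\<dots> = I #> st x y"
    using stI ic i x y st_closed N.phi_I N.phi_conj N.q_rone N.phi_car by simp
  finally show ?thesis .
qed

lemma set_eq_pointwise:
  assumes "S \<subseteq> rcosets\<^bsub>G\<^esub> I" "T \<subseteq> carrier G"
    and "\<And>x. x \<in> carrier G \<Longrightarrow> (I #>\<^bsub>G\<^esub> x \<in> S) = (x \<in> T)"
  shows "S = quot_img G I T"
proof
  show "S \<subseteq> quot_img G I T"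
  proof
    fix C assume C: "C \<in> S"
    then obtain x where x: "x \<in> carrier G" "C = I #>\<^bsub>G\<^esub> x"
      using assms(1) unfolding RCOSETS_def by blast
    then have "x \<in> T" using assms(3) C by blast
    then show "C \<in> quot_img G I T" unfolding quot_img_def using x by blast
  qed
next
  show "quot_img G I T \<subseteq> S" unfolding quot_img_def using assms by blast
qed

lemma (in mlax) main_lemma:
  fixes I :: "'a set"
  assumes "mla_ideal G st I"
  shows "(I \<inter> comm_subgroup G = {\<one>\<^bsub>G\<^esub>} \<longrightarrow>
            grp_center (G Mod I) = quot_img G I (grp_center G))
       \<and> (I \<inter> star_ideal G st = {\<one>\<^bsub>G\<^esub>} \<longrightarrow>
            lie_center (G Mod I) (quot_star G st I) = quot_img G I (lie_center G st))
       \<and> (I \<inter> M_comm G st = {\<one>\<^bsub>G\<^esub>} \<longrightarrow>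
            mla_center (G Mod I) (quot_star G st I) = quot_img G I (mla_center G st))"
proof -
  have N: "I \<lhd> G" and id: "\<forall>x\<in>carrier G. \<forall>y\<in>I. st x y \<in> I"
    using assms(1) unfolding mla_ideal_def by auto
  interpret N: normal I G by (rule N)
  have Isub: "I \<subseteq> carrier G" by (rule N.subset)
  have oneI: "\<one> \<in> I" by (rule N.one_closed)
  have gc: "grp_center (G Mod I) = {C \<in> rcosets I. \<forall>D\<in>rcosets I. C <#> D = D <#> C}"
    unfolding grp_center_def by (simp add: FactGroup_def)
  have lc: "lie_center (G Mod I) (quot_star G st I) =
      {C \<in> rcosets I. \<forall>D\<in>rcosets I. quot_star G st I C D = I}"
    unfolding lie_center_def by (simp add: FactGroup_def)
  have QS: "quot_star G st I (I #> x) (I #> y) = I #> st x y"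
    if x: "x \<in> carrier G" and y: "y \<in> carrier G" for x y
  proof -
    have "(SOME a. a \<in> I #> x) \<in> I #> x" using rcos_self[OF x N.subgroup_axioms] by (rule someI)
    moreover have "(SOME a. a \<in> I #> y) \<in> I #> y" using rcos_self[OF y N.subgroup_axioms] by (rule someI)
    ultimately show ?thesis unfolding quot_star_def using wd[OF N id x y] by blast
  qed
  have ZC: "(I #> x \<in> grp_center (G Mod I)) = (x \<in> grp_center G)"
    if hyp: "I \<inter> comm_subgroup G = {\<one>}" and x: "x \<in> carrier G" for x
  proof
    assume "I #> x \<in> grp_center (G Mod I)"
    then have H: "\<forall>D\<in>rcosets I. (I #> x) <#> D = D <#> (I #> x)" using gc by simp
    have "x \<otimes> y = y \<otimes> x" if y: "y \<in> carrier G" for y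
    proof -
      have "(I #> x) <#> (I #> y) = (I #> y) <#> (I #> x)"
        using H N.phi_car[OF y] by blast
      then have "I #> (x \<otimes> y) = I #> (y \<otimes> x)"
        using x y by (simp add: N.rcos_sum)
      then have "x \<otimes> y \<in> I #> (y \<otimes> x)" using rcos_self[of "x \<otimes> y" I] x y N.subgroup_axioms by simp
      then have m: "x \<otimes> y \<otimes> inv (y \<otimes> x) \<in> I"
        using N.rcos_module_imp[OF is_group, of "y \<otimes> x"] x y by simp
      have e: "x \<otimes> y \<otimes> inv (y \<otimes> x) = x \<otimes> y \<otimes> inv x \<otimes> inv y"
        using x y by (simp add: inv_mult_group m_assoc)
      have "x \<otimes> y \<otimes> inv x \<otimes> inv y \<in> derived_set G (carrier G)" using x y by blast
      then have "x \<otimes> y \<otimes> inv (y \<otimes> x) \<in> comm_subgroup G"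
        unfolding comm_subgroup_def derived_def e by (rule generate.incl)
      with m hyp have "x \<otimes> y \<otimes> inv (y \<otimes> x) = \<one>" by blast
      then have "inv (inv (y \<otimes> x)) = x \<otimes> y" using x y by (intro inv_equality) auto
      then show ?thesis using x y by simp
    qed
    then show "x \<in> grp_center G" unfolding grp_center_def using x by blast
  next
    assume "x \<in> grp_center G"
    then have c: "\<forall>y\<in>carrier G. x \<otimes> y = y \<otimes> x" unfolding grp_center_def by blast
    have "(I #> x) <#> D = D <#> (I #> x)" if D: "D \<in> rcosets I" for D
    proof -
      obtain y where y: "y \<in> carrier G" "D = I #> y" using D unfolding RCOSETS_def by blast
      then show ?thesis using c x by (simp add: N.rcos_sum)
    qed
    then show "I #> x \<in> grp_center (G Mod I)" using gc N.phi_car[OF x] by simp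
  qed
  have LC: "(I #> x \<in> lie_center (G Mod I) (quot_star G st I)) = (x \<in> lie_center G st)"
    if hyp: "I \<inter> star_ideal G st = {\<one>}" and x: "x \<in> carrier G" for x
  proof
    assume "I #> x \<in> lie_center (G Mod I) (quot_star G st I)"
    then have H: "\<forall>D\<in>rcosets I. quot_star G st I (I #> x) D = I" using lc by simp
    have "st x y = \<one>" if y: "y \<in> carrier G" for y
    proof -
      have "I #> st x y = I" using H N.phi_car[OF y] QS[OF x y] by simp
      then have m: "st x y \<in> I" using rcos_self[of "st x y" I] st_closed x y N.subgroup_axioms by simp
      have "st x y \<in> star_ideal G st" unfolding star_ideal_def using x y by blast
      with m hyp show ?thesis by blast
    qed
    then show "x \<in> lie_center G st" unfolding lie_center_def using x by blast
  next
    assume "x \<in> lie_center G st"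
    then have c: "\<forall>y\<in>carrier G. st x y = \<one>" unfolding lie_center_def by blast
    have "quot_star G st I (I #> x) D = I" if D: "D \<in> rcosets I" for D
    proof -
      obtain y where y: "y \<in> carrier G" "D = I #> y" using D unfolding RCOSETS_def by blast
      then show ?thesis using c x QS Isub by simp
    qed
    then show "I #> x \<in> lie_center (G Mod I) (quot_star G st I)" using lc N.phi_car[OF x] by simp
  qed
  have gcsub: "grp_center (G Mod I) \<subseteq> rcosets I" using gc by auto
  have lcsub: "lie_center (G Mod I) (quot_star G st I) \<subseteq> rcosets I" using lc by auto
  have gsub: "grp_center G \<subseteq> carrier G" unfolding grp_center_def by auto
  have lsub: "lie_center G st \<subseteq> carrier G" unfolding lie_center_def by auto
  have P1: "I \<inter> comm_subgroup G = {\<one>} \<Longrightarrow> grp_center (G Mod I) = quot_img G I (grp_center G)"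
    by (rule set_eq_pointwise[OF gcsub gsub]) (rule ZC)
  have P2: "I \<inter> star_ideal G st = {\<one>} \<Longrightarrow>
      lie_center (G Mod I) (quot_star G st I) = quot_img G I (lie_center G st)"
    by (rule set_eq_pointwise[OF lcsub lsub]) (rule LC)
  have commsub: "comm_subgroup G \<subseteq> carrier G"
    unfolding comm_subgroup_def using derived_incl[of "carrier G" "carrier G"] subgroup_self by blast
  have one_comm: "\<one> \<in> comm_subgroup G" unfolding comm_subgroup_def derived_def by (rule generate.one)
  have car_ideal: "mla_ideal G st (carrier G)"
    unfolding mla_ideal_def using normal_self st_closed by blast
  have starsub: "star_ideal G st \<subseteq> carrier G"
    unfolding star_ideal_def using car_ideal st_closed by blast
  have one_star: "\<one> \<in> star_ideal G st"
    unfolding star_ideal_def mla_ideal_def using normal.axioms(1) subgroup.one_closed by blast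
  have s1: "star_ideal G st \<subseteq> M_comm G st"
  proof
    fix s assume s: "s \<in> star_ideal G st"
    then have "s = s \<otimes> \<one>" using starsub by auto
    then show "s \<in> M_comm G st" unfolding M_comm_def set_mult_def using s one_comm by blast
  qed
  have s2: "comm_subgroup G \<subseteq> M_comm G st"
  proof
    fix s assume s: "s \<in> comm_subgroup G"
    then have "s = \<one> \<otimes> s" using commsub by auto
    then show "s \<in> M_comm G st" unfolding M_comm_def set_mult_def using s one_star by blast
  qed
  have P3: "mla_center (G Mod I) (quot_star G st I) = quot_img G I (mla_center G st)"
    if hyp: "I \<inter> M_comm G st = {\<one>}"
  proof -
    have h1: "I \<inter> comm_subgroup G = {\<one>}" using hyp s2 oneI one_comm by blast
    have h2: "I \<inter> star_ideal G st = {\<one>}" using hyp s1 oneI one_star by blast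
    show ?thesis unfolding mla_center_def
    proof (rule set_eq_pointwise)
      show "lie_center (G Mod I) (quot_star G st I) \<inter> grp_center (G Mod I) \<subseteq> rcosets I"
        using lcsub by blast
      show "lie_center G st \<inter> grp_center G \<subseteq> carrier G" using lsub by blast
      fix x assume x: "x \<in> carrier G"
      show "(I #> x \<in> lie_center (G Mod I) (quot_star G st I) \<inter> grp_center (G Mod I)) =
          (x \<in> lie_center G st \<inter> grp_center G)"
        using ZC[OF h1 x] LC[OF h2 x] by blast
    qed
  qed
  show ?thesis using P1 P2 P3 by blast
qed


theorem lemma3p1:
  fixes G :: "('a, 'b) monoid_scheme" and st :: "'a \<Rightarrow> 'a \<Rightarrow> 'a" and I :: "'a set"
  assumes "mult_lie_alg G st" and "mla_ideal G st I"
  shows "(I \<inter> comm_subgroup G = {\<one>\<^bsub>G\<^esub>} \<longrightarrow>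
            grp_center (G Mod I) = quot_img G I (grp_center G))
       \<and> (I \<inter> star_ideal G st = {\<one>\<^bsub>G\<^esub>} \<longrightarrow>
            lie_center (G Mod I) (quot_star G st I) = quot_img G I (lie_center G st))
       \<and> (I \<inter> M_comm G st = {\<one>\<^bsub>G\<^esub>} \<longrightarrow>
            mla_center (G Mod I) (quot_star G st I) = quot_img G I (mla_center G st))"
  using mlax.main_lemma[OF mlaxI[OF assms(1)] assms(2)] .

end
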